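(* (i) Every invertible linear map $A:\mathcal{F}_p\to\mathcal{F}_p$ (resp. $\mathcal{F}_c\to\mathcal{F}_c$), $f\mapsto fA$, preserves static equilibrium: a force system $\{f_i\}_{i\in\mathcal{I}}$ satisfies $\sum_i f_i=0$ if and only if $\sum_i f_iA=0$. Every projective transformation of a statics problem can be described as the composition of a linear-map equivalence class $A_\sim=\{\lambda A:\lambda\neq 0\}$ acting on the forces and an equilibrium preserving congruence of the force system, and every such composition gives a projective transformation of the statics problem. (ii) Every invertible linear map $A:\mathcal{E}_p\to\mathcal{E}_p$ (resp. $\mathcal{E}_c\to\mathcal{E}_c$), $e\mapsto eA$, preserves compatibility. Every projective transformation of a kinematics problem can be described as the composition of a linear-map equivalence class acting on the velocities and a compatibility preserving congruence of the velocity system, and every such composition gives a projective transformation of the kinematics problem.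
   Context: Points of the real projective plane $PG(2)$ are classes of nonzero vectors of $\mathbb{R}^3$ up to nonzero scaling; a Euclidean point $\vec p\in\mathbb{R}^2$ is $(\vec p,1)$ and an ideal point in direction $\vec u$ is $(\vec u,0)$. Lines are also represented by nonzero vectors up to scaling, and point $p$ lies on line $l$ iff $\langle p,l\rangle=0$. A projective transformation of $PG(2)$ (map sending points to points, lines to lines, preserving incidence) is given by an invertible $3\times3$ matrix $P$ up to scaling, acting on points as $p\mapsto pP$ and on lines as $l\mapsto lP^{-T}$. Mechanical quantities (bodies lie in the $x,y$ plane): $\mathcal{F}_p$: a coplanar force with components $F_x,F_y$ and moment $M_z$ about the origin is $f=(-F_y,F_x,M_z)\in\mathbb{R}^3$; its line of action is the projective line $f$ (up to scaling). $\mathcal{F}_c$: a force orthogonal to the plane with $z$-component $F_z$ and moments $M_x,M_y$ about the coordinate axes is $f=(-M_y,M_x,F_z)$; it represents its point of action. $\mathcal{E}_c$: a planar rigid motion with velocity $(v_x,v_y)$ of the origin and angular velocity $\omega_z$ is $e=(-v_y,v_x,\omega_z)$, representing the point about which the body rotates. $\mathcal{E}_p$: a motion with $z$-velocity $v_z$ of the origin and angular velocity components $\omega_x,\omega_y$ is $e=(-\omega_y,\omega_x,v_z)$, representing the line about which the body rotates. A force system on a body is in static equilibrium iff the sum of its vectors is $0$. Compatibility conditions have the form $\langle l,e_j-e_k\rangle=0$ for a line $l$ (in $\mathcal{E}_c$) or $\langle p,e_j-e_k\rangle=0$ for a point $p$ (in $\mathcal{E}_p$), for velocities $e_j,e_k$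 of two bodies. A congruence of a force (resp. velocity) system $\{f_i\}$ is a map $\{f_i\}\mapsto\{\psi_if_i\}$ with all $\psi_i\in\mathbb{R}\setminus\{0\}$; it is equilibrium (resp. compatibility) preserving for a given problem if static equilibrium (resp. compatibility) of all (sub)bodies of the problem is preserved. A projective transformation of a statics (resp. kinematics) problem is a transformation of the structure into another one such that all points and lines of the structure, and the points and lines of action of the forces (resp. velocities), are transformed by one projective transformation of $PG(2)$, and the image is in static equilibrium (resp. compatible) if and only if the original is. *)

theory Defs
  imports "HOL-Analysis.Analysis"
begin

text \<open>Projective points and lines of PG(2) are represented by vectors of real^3
  (up to nonzero scaling). Points transform as p |-> p P, lines as l |-> l P^(-T).\<close>

datatype pkind = PointK | LineK

text \<open>F_p: coplanar forces (represent lines of action);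
  F_c: forces orthogonal to the plane (represent points of action);
  E_c: planar motions (represent rotation points);
  E_p: out-of-plane motions (represent rotation lines).\<close>
datatype force_space = Fp | Fc
datatype vel_space = Ec | Ep

fun force_kind :: "force_space \<Rightarrow> pkind" where
  "force_kind Fp = LineK"
| "force_kind Fc = PointK"

fun vel_kind :: "vel_space \<Rightarrow> pkind" where
  "vel_kind Ec = PointK"
| "vel_kind Ep = LineK"

fun dual_kind :: "pkind \<Rightarrow> pkind" where
  "dual_kind PointK = LineK"
| "dual_kind LineK = PointK"

definition proj_matrix :: "pkind \<Rightarrow> real^3^3 \<Rightarrow> real^3^3" where
  "proj_matrix k P = (case k of PointK \<Rightarrow> P | LineK \<Rightarrow> matrix_inv (transpose P))"

definition proj_act :: "pkind \<Rightarrow> real^3^3 \<Rightarrow> real^3 \<Rightarrow> real^3" where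
  "proj_act k P v = v v* proj_matrix k P"

definition lin_class :: "real^3^3 \<Rightarrow> (real^3^3) set" where
  "lin_class A = {c *\<^sub>R A | c. c \<noteq> 0}"

text \<open>A statics problem: force system f on the finite index set I; bodies (and
  sub-bodies) are given as the sets Bs of indices of forces acting on them.\<close>
definition in_equilibrium :: "'i set set \<Rightarrow> ('i \<Rightarrow> real^3) \<Rightarrow> bool" where
  "in_equilibrium Bs f \<longleftrightarrow> (\<forall>B\<in>Bs. (\<Sum>i\<in>B. f i) = 0)"

definition congruence :: "('i \<Rightarrow> real) \<Rightarrow> ('i \<Rightarrow> real^3) \<Rightarrow> ('i \<Rightarrow> real^3)" where
  "congruence \<psi> f = (\<lambda>i. \<psi> i *\<^sub>R f i)"

definition equilibrium_preserving :: "'i set set \<Rightarrow> ('i \<Rightarrow> real) \<Rightarrow> ('i \<Rightarrow> real^3) \<Rightarrow> bool" where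
  "equilibrium_preserving Bs \<psi> f \<longleftrightarrow> (in_equilibrium Bs (congruence \<psi> f) \<longleftrightarrow> in_equilibrium Bs f)"

definition statics_proj_transf ::
  "force_space \<Rightarrow> 'i set \<Rightarrow> 'i set set \<Rightarrow> ('i \<Rightarrow> real^3) \<Rightarrow> real^3^3 \<Rightarrow> ('i \<Rightarrow> real^3) \<Rightarrow> bool" where
  "statics_proj_transf S I Bs f P g \<longleftrightarrow>
     invertible P
     \<and> (\<forall>i\<in>I. \<exists>c. c \<noteq> 0 \<and> g i = c *\<^sub>R proj_act (force_kind S) P (f i))
     \<and> (in_equilibrium Bs g \<longleftrightarrow> in_equilibrium Bs f)"

text \<open>A kinematics problem: velocities e of the bodies indexed by J; compatibility
  conditions C given as triples (c, j, k) meaning <c, e_j - e_k> = 0, where c is a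
  line (for E_c) or a point (for E_p).\<close>
definition compatible :: "((real^3) \<times> 'j \<times> 'j) set \<Rightarrow> ('j \<Rightarrow> real^3) \<Rightarrow> bool" where
  "compatible C e \<longleftrightarrow> (\<forall>(c, j, k)\<in>C. c \<bullet> (e j - e k) = 0)"

definition map_constraints :: "(real^3 \<Rightarrow> real^3) \<Rightarrow> ((real^3) \<times> 'j \<times> 'j) set \<Rightarrow> ((real^3) \<times> 'j \<times> 'j) set" where
  "map_constraints h C = (\<lambda>(c, j, k). (h c, j, k)) ` C"

definition compatibility_preserving :: "((real^3) \<times> 'j \<times> 'j) set \<Rightarrow> ('j \<Rightarrow> real) \<Rightarrow> ('j \<Rightarrow> real^3) \<Rightarrow> bool" where
  "compatibility_preserving C \<psi> e \<longleftrightarrow> (compatible C (congruence \<psi> e) \<longleftrightarrow> compatible C e)"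

definition kin_proj_transf ::
  "vel_space \<Rightarrow> 'j set \<Rightarrow> ((real^3) \<times> 'j \<times> 'j) set \<Rightarrow> ('j \<Rightarrow> real^3) \<Rightarrow> real^3^3 \<Rightarrow> ('j \<Rightarrow> real^3) \<Rightarrow> bool" where
  "kin_proj_transf S J C e P g \<longleftrightarrow>
     invertible P
     \<and> (\<forall>j\<in>J. \<exists>c. c \<noteq> 0 \<and> g j = c *\<^sub>R proj_act (vel_kind S) P (e j))
     \<and> (compatible (map_constraints (proj_act (dual_kind (vel_kind S)) P) C) g \<longleftrightarrow> compatible C e)"

end

theory Submission
  imports Defs
begin


lemma minv: fixes A :: "real^'n^'n" assumes "invertible A"
  shows "A ** matrix_inv A = mat 1" "matrix_inv A ** A = mat 1"
proof -
  have "\<exists>A'. A ** A' = mat 1 \<and> A' ** A = mat 1" using assms unfolding invertible_def by blast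
  then have "A ** matrix_inv A = mat 1 \<and> matrix_inv A ** A = mat 1"
    unfolding matrix_inv_def by (rule someI_ex)
  then show "A ** matrix_inv A = mat 1" "matrix_inv A ** A = mat 1" by auto
qed

lemma minv_unique: fixes A B :: "real^'n^'n" assumes "A ** B = mat 1"
  shows "matrix_inv A = B"
proof -
  have inv: "invertible A" using assms invertible_right_inverse by blast
  have "matrix_inv A = matrix_inv A ** (A ** B)" using assms by (simp add: matrix_mul_rid)
  also have "\<dots> = (matrix_inv A ** A) ** B" by (simp add: matrix_mul_assoc)
  also have "\<dots> = B" using minv[OF inv] by (simp add: matrix_mul_lid)
  finally show ?thesis .
qed

lemma minv_invertible: fixes A :: "real^'n^'n" assumes "invertible A"
  shows "invertible (matrix_inv A)"
  using minv[OF assms] invertible_def by blast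

lemma minv_minv: fixes A :: "real^'n^'n" assumes "invertible A"
  shows "matrix_inv (matrix_inv A) = A"
  using minv[OF assms] minv_unique by blast

lemma minv_transpose: fixes A :: "real^'n^'n" assumes "invertible A"
  shows "matrix_inv (transpose A) = transpose (matrix_inv A)"
  by (rule minv_unique) (metis minv(2)[OF assms] matrix_transpose_mul transpose_mat)

lemma vm_zero_iff: fixes A :: "real^'n^'n" assumes "invertible A"
  shows "(x v* A = 0) \<longleftrightarrow> x = 0"
proof
  assume "x v* A = 0"
  then have "(x v* A) v* matrix_inv A = 0" by simp
  then show "x = 0" using minv[OF assms] by (simp add: vector_matrix_mul_assoc vector_matrix_mul_rid)
qed simp

lemma vm_sum: fixes A :: "real^'n^'n"
  shows "(\<Sum>i\<in>B. f i) v* A = (\<Sum>i\<in>B. f i v* A)"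
proof (cases "finite B")
  case True then show ?thesis
    by (induction B rule: finite_induct) (simp_all add: vector_matrix_left_distrib)
qed simp

lemma inner_inv: fixes A :: "real^'n^'n" assumes "invertible A"
  shows "(x v* matrix_inv (transpose A)) \<bullet> (y v* A) = x \<bullet> y"
proof -
  have "(x v* matrix_inv (transpose A)) \<bullet> (y v* A) = x \<bullet> (matrix_inv (transpose A) *v (transpose A *v y))"
    by (metis dot_lmul_matrix transpose_matrix_vector)
  also have "\<dots> = x \<bullet> y"
    using minv(2)[OF transpose_invertible[OF assms]]
    by (metis matrix_vector_mul_assoc matrix_vector_mul_lid)
  finally show ?thesis .
qed

lemma pm_invertible: assumes "invertible P" shows "invertible (proj_matrix k P)"
  using assms by (cases k) (simp_all add: proj_matrix_def minv_invertible transpose_invertible)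

lemma pm_dual: assumes "invertible P"
  shows "proj_matrix (dual_kind k) P = matrix_inv (transpose (proj_matrix k P))"
  using assms by (cases k) (simp_all add: proj_matrix_def minv_transpose minv_minv transpose_invertible)


lemma pm_onto: assumes "invertible (A::real^3^3)"
  shows "\<exists>P. invertible P \<and> proj_matrix k P = A"
proof (cases k)
  case PointK then show ?thesis using assms by (auto simp: proj_matrix_def)
next
  case LineK
  have "invertible (transpose (matrix_inv A))" by (simp add: assms minv_invertible transpose_invertible)
  moreover have "proj_matrix k (transpose (matrix_inv A)) = A"
    using LineK assms by (simp add: proj_matrix_def minv_minv)
  ultimately show ?thesis by blast
qed


lemma eq_transform:
  assumes "\<forall>B\<in>Bs. B \<subseteq> I" "invertible (A::real^3^3)"
    "\<forall>i\<in>I. g i = congruence \<psi> f i v* A"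
  shows "in_equilibrium Bs g \<longleftrightarrow> in_equilibrium Bs (congruence \<psi> f)"
proof -
  have "(\<Sum>i\<in>B. g i) = (\<Sum>i\<in>B. congruence \<psi> f i) v* A" if "B \<in> Bs" for B
  proof -
    have "(\<Sum>i\<in>B. g i) = (\<Sum>i\<in>B. congruence \<psi> f i v* A)"
      using assms that by (intro sum.cong) auto
    then show ?thesis by (simp add: vm_sum)
  qed
  then show ?thesis unfolding in_equilibrium_def using vm_zero_iff[OF assms(2)] by auto
qed

lemma statics_core:
  assumes "\<forall>B\<in>Bs. B \<subseteq> I" "invertible (M::real^3^3)"
  shows "((\<forall>i\<in>I. \<exists>c. c \<noteq> 0 \<and> g i = c *\<^sub>R (f i v* M)) \<and> (in_equilibrium Bs g \<longleftrightarrow> in_equilibrium Bs f))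
     \<longleftrightarrow> (\<exists>A \<psi>. A \<in> lin_class M \<and> (\<forall>i\<in>I. \<psi> i \<noteq> 0)
               \<and> equilibrium_preserving Bs \<psi> f \<and> (\<forall>i\<in>I. g i = congruence \<psi> f i v* A))"
proof
  assume H: "(\<forall>i\<in>I. \<exists>c. c \<noteq> 0 \<and> g i = c *\<^sub>R (f i v* M)) \<and> (in_equilibrium Bs g \<longleftrightarrow> in_equilibrium Bs f)"
  then obtain \<psi> where \<psi>: "\<forall>i\<in>I. \<psi> i \<noteq> 0 \<and> g i = \<psi> i *\<^sub>R (f i v* M)" by metis
  have g: "\<forall>i\<in>I. g i = congruence \<psi> f i v* M"
    using \<psi> by (simp add: congruence_def scaleR_vector_matrix_assoc)
  have "M \<in> lin_class M" unfolding lin_class_def by (rule CollectI, rule exI[of _ 1]) simp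
  moreover have "equilibrium_preserving Bs \<psi> f"
    using eq_transform[OF assms g] H unfolding equilibrium_preserving_def by simp
  ultimately show "\<exists>A \<psi>. A \<in> lin_class M \<and> (\<forall>i\<in>I. \<psi> i \<noteq> 0)
               \<and> equilibrium_preserving Bs \<psi> f \<and> (\<forall>i\<in>I. g i = congruence \<psi> f i v* A)"
    using \<psi> g by blast
next
  assume "\<exists>A \<psi>. A \<in> lin_class M \<and> (\<forall>i\<in>I. \<psi> i \<noteq> 0)
               \<and> equilibrium_preserving Bs \<psi> f \<and> (\<forall>i\<in>I. g i = congruence \<psi> f i v* A)"
  then obtain A \<psi> where A: "A \<in> lin_class M" and \<psi>: "\<forall>i\<in>I. \<psi> i \<noteq> 0"
    and ep: "equilibrium_preserving Bs \<psi> f" and g: "\<forall>i\<in>I. g i = congruence \<psi> f i v* A" by blast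
  obtain a where a: "a \<noteq> 0" "A = a *\<^sub>R M" using A unfolding lin_class_def by blast
  have invA: "invertible A" using a assms(2) scalar_invertible by blast
  have "\<forall>i\<in>I. \<exists>c. c \<noteq> 0 \<and> g i = c *\<^sub>R (f i v* M)"
  proof
    fix i assume "i \<in> I"
    then have "g i = (a * \<psi> i) *\<^sub>R (f i v* M) \<and> a * \<psi> i \<noteq> 0" using g \<psi> a
      by (simp add: congruence_def scaleR_vector_matrix_assoc vector_scaleR_matrix_ac)
    then show "\<exists>c. c \<noteq> 0 \<and> g i = c *\<^sub>R (f i v* M)" by blast
  qed
  moreover have "in_equilibrium Bs g \<longleftrightarrow> in_equilibrium Bs f"
    using eq_transform[OF assms(1) invA g] ep unfolding equilibrium_preserving_def by simp
  ultimately show "(\<forall>i\<in>I. \<exists>c. c \<noteq> 0 \<and> g i = c *\<^sub>R (f i v* M)) \<and> (in_equilibrium Bs g \<longleftrightarrow> in_equilibrium Bs f)"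
    by blast
qed

lemma compat_transform:
  assumes "\<forall>(c, j, k)\<in>C. j \<in> J \<and> k \<in> J" "invertible (M::real^3^3)"
    "\<forall>j\<in>J. g j = a *\<^sub>R (h j v* M)" "a \<noteq> 0"
  shows "compatible (map_constraints (\<lambda>c. c v* matrix_inv (transpose M)) C) g \<longleftrightarrow> compatible C h"
proof -
  have key: "(c v* matrix_inv (transpose M)) \<bullet> (g j - g k) = a * (c \<bullet> (h j - h k))"
    if "(c, j, k) \<in> C" for c j k
  proof -
    have "g j - g k = a *\<^sub>R ((h j - h k) v* M)"
      using assms(1,3) that by (auto simp: vector_matrix_mult_diff_distrib scaleR_diff_right)
    then show ?thesis using inner_inv[OF assms(2)] by simp
  qed
  show ?thesis unfolding compatible_def map_constraints_def
    using key assms(4) by auto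
qed


lemma kin_core:
  assumes "\<forall>(c, j, k)\<in>C. j \<in> J \<and> k \<in> J" "invertible (M::real^3^3)"
  shows "((\<forall>j\<in>J. \<exists>c. c \<noteq> 0 \<and> g j = c *\<^sub>R (e j v* M))
          \<and> (compatible (map_constraints (\<lambda>c. c v* matrix_inv (transpose M)) C) g \<longleftrightarrow> compatible C e))
     \<longleftrightarrow> (\<exists>A \<psi>. A \<in> lin_class M \<and> (\<forall>j\<in>J. \<psi> j \<noteq> 0)
               \<and> compatibility_preserving C \<psi> e \<and> (\<forall>j\<in>J. g j = congruence \<psi> e j v* A))"
proof
  assume H: "(\<forall>j\<in>J. \<exists>c. c \<noteq> 0 \<and> g j = c *\<^sub>R (e j v* M))
          \<and> (compatible (map_constraints (\<lambda>c. c v* matrix_inv (transpose M)) C) g \<longleftrightarrow> compatible C e)"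
  then obtain \<psi> where \<psi>: "\<forall>j\<in>J. \<psi> j \<noteq> 0 \<and> g j = \<psi> j *\<^sub>R (e j v* M)" by metis
  have g: "\<forall>j\<in>J. g j = congruence \<psi> e j v* M"
    using \<psi> by (simp add: congruence_def scaleR_vector_matrix_assoc)
  have g1: "\<forall>j\<in>J. g j = 1 *\<^sub>R (congruence \<psi> e j v* M)" using g by simp
  have "M \<in> lin_class M" unfolding lin_class_def by (rule CollectI, rule exI[of _ 1]) simp
  moreover have "compatibility_preserving C \<psi> e"
    using compat_transform[OF assms g1] H unfolding compatibility_preserving_def by simp
  ultimately show "\<exists>A \<psi>. A \<in> lin_class M \<and> (\<forall>j\<in>J. \<psi> j \<noteq> 0)
               \<and> compatibility_preserving C \<psi> e \<and> (\<forall>j\<in>J. g j = congruence \<psi> e j v* A)"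
    using \<psi> g by blast
next
  assume "\<exists>A \<psi>. A \<in> lin_class M \<and> (\<forall>j\<in>J. \<psi> j \<noteq> 0)
               \<and> compatibility_preserving C \<psi> e \<and> (\<forall>j\<in>J. g j = congruence \<psi> e j v* A)"
  then obtain A \<psi> where A: "A \<in> lin_class M" and \<psi>: "\<forall>j\<in>J. \<psi> j \<noteq> 0"
    and cp: "compatibility_preserving C \<psi> e" and g: "\<forall>j\<in>J. g j = congruence \<psi> e j v* A" by blast
  obtain a where a: "a \<noteq> 0" "A = a *\<^sub>R M" using A unfolding lin_class_def by blast
  have ga: "\<forall>j\<in>J. g j = a *\<^sub>R (congruence \<psi> e j v* M)"
    using g a by (simp add: vector_scaleR_matrix_ac)
  have "\<forall>j\<in>J. \<exists>c. c \<noteq> 0 \<and> g j = c *\<^sub>R (e j v* M)"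
  proof
    fix j assume "j \<in> J"
    then have "g j = (a * \<psi> j) *\<^sub>R (e j v* M) \<and> a * \<psi> j \<noteq> 0" using g \<psi> a
      by (simp add: congruence_def scaleR_vector_matrix_assoc vector_scaleR_matrix_ac)
    then show "\<exists>c. c \<noteq> 0 \<and> g j = c *\<^sub>R (e j v* M)" by blast
  qed
  moreover have "compatible (map_constraints (\<lambda>c. c v* matrix_inv (transpose M)) C) g \<longleftrightarrow> compatible C e"
    using compat_transform[OF assms ga a(1)] cp unfolding compatibility_preserving_def by simp
  ultimately show "(\<forall>j\<in>J. \<exists>c. c \<noteq> 0 \<and> g j = c *\<^sub>R (e j v* M))
          \<and> (compatible (map_constraints (\<lambda>c. c v* matrix_inv (transpose M)) C) g \<longleftrightarrow> compatible C e)"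
    by blast
qed

lemma lin_class_inv: "invertible M \<Longrightarrow> A \<in> lin_class M \<Longrightarrow> invertible (A::real^3^3)"
  unfolding lin_class_def using scalar_invertible by blast

lemma lin_class_self: "M \<in> lin_class M"
  unfolding lin_class_def by (rule CollectI, rule exI[of _ 1]) simp

lemma stat_part:
  assumes "\<forall>B\<in>Bs. B \<subseteq> I" "invertible P"
  shows "statics_proj_transf S I Bs f P g \<longleftrightarrow>
           (\<exists>A \<psi>. A \<in> lin_class (proj_matrix (force_kind S) P) \<and> (\<forall>i\<in>I. \<psi> i \<noteq> 0)
               \<and> equilibrium_preserving Bs \<psi> f \<and> (\<forall>i\<in>I. g i = congruence \<psi> f i v* A))"
  unfolding statics_proj_transf_def proj_act_def
  using statics_core[OF assms(1) pm_invertible[OF assms(2)]] assms(2) by simp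

lemma kin_part:
  fixes C :: "((real^3) \<times> 'j \<times> 'j) set"
  assumes "\<forall>(c, j, k)\<in>C. j \<in> J \<and> k \<in> J" "invertible P"
  shows "kin_proj_transf S J C e P g \<longleftrightarrow>
           (\<exists>A \<psi>. A \<in> lin_class (proj_matrix (vel_kind S) P) \<and> (\<forall>j\<in>J. \<psi> j \<noteq> 0)
               \<and> compatibility_preserving C \<psi> e \<and> (\<forall>j\<in>J. g j = congruence \<psi> e j v* A))"
proof -
  have "proj_act (dual_kind (vel_kind S)) P = (\<lambda>c. c v* matrix_inv (transpose (proj_matrix (vel_kind S) P)))"
    using pm_dual[OF assms(2)] by (simp add: proj_act_def fun_eq_iff)
  then show ?thesis unfolding kin_proj_transf_def
    using kin_core[OF assms(1) pm_invertible[OF assms(2)]] assms(2) by (simp add: proj_act_def)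
qed



theorem theorem3:
  shows
  "\<comment> \<open>(i) linear maps preserve static equilibrium\<close>
   (\<forall>(A::real^3^3) (Bs::'i set set) (f::'i \<Rightarrow> real^3).
      invertible A \<longrightarrow> (in_equilibrium Bs f \<longleftrightarrow> in_equilibrium Bs (\<lambda>i. f i v* A)))
 \<and> (\<forall>(S::force_space) (I::'i set) (Bs::'i set set) (f::'i \<Rightarrow> real^3).
      finite I \<and> (\<forall>B\<in>Bs. B \<subseteq> I) \<longrightarrow>
      (\<forall>P g. invertible P \<longrightarrow>
         (statics_proj_transf S I Bs f P g \<longleftrightarrow>
           (\<exists>A \<psi>. A \<in> lin_class (proj_matrix (force_kind S) P) \<and> (\<forall>i\<in>I. \<psi> i \<noteq> 0)
               \<and> equilibrium_preserving Bs \<psi> f \<and> (\<forall>i\<in>I. g i = congruence \<psi> f i v* A))))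
    \<and> (\<forall>g. (\<exists>P. statics_proj_transf S I Bs f P g) \<longleftrightarrow>
           (\<exists>A \<psi>. invertible A \<and> (\<forall>i\<in>I. \<psi> i \<noteq> 0)
               \<and> equilibrium_preserving Bs \<psi> f \<and> (\<forall>i\<in>I. g i = congruence \<psi> f i v* A))))
 \<and> \<comment> \<open>(ii) linear maps preserve compatibility\<close>
   (\<forall>(A::real^3^3) (C::((real^3) \<times> 'j \<times> 'j) set) (e::'j \<Rightarrow> real^3).
      invertible A \<longrightarrow>
      (compatible C e \<longleftrightarrow>
       compatible (map_constraints (\<lambda>c. c v* matrix_inv (transpose A)) C) (\<lambda>j. e j v* A)))
 \<and> (\<forall>(S::vel_space) (J::'j set) (C::((real^3) \<times> 'j \<times> 'j) set) (e::'j \<Rightarrow> real^3).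
      finite J \<and> (\<forall>(c, j, k)\<in>C. j \<in> J \<and> k \<in> J) \<longrightarrow>
      (\<forall>P g. invertible P \<longrightarrow>
         (kin_proj_transf S J C e P g \<longleftrightarrow>
           (\<exists>A \<psi>. A \<in> lin_class (proj_matrix (vel_kind S) P) \<and> (\<forall>j\<in>J. \<psi> j \<noteq> 0)
               \<and> compatibility_preserving C \<psi> e \<and> (\<forall>j\<in>J. g j = congruence \<psi> e j v* A))))
    \<and> (\<forall>g. (\<exists>P. kin_proj_transf S J C e P g) \<longleftrightarrow>
           (\<exists>A \<psi>. invertible A \<and> (\<forall>j\<in>J. \<psi> j \<noteq> 0)
               \<and> compatibility_preserving C \<psi> e \<and> (\<forall>j\<in>J. g j = congruence \<psi> e j v* A))))"
  proof (intro conjI allI impI)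
  fix A :: "real^3^3" and Bs :: "'i set set" and f :: "'i \<Rightarrow> real^3"
  assume "invertible A"
  then show "in_equilibrium Bs f \<longleftrightarrow> in_equilibrium Bs (\<lambda>i. f i v* A)"
    using eq_transform[of Bs UNIV A "\<lambda>i. f i v* A" "\<lambda>_. 1" f]
    by (simp add: congruence_def)
next
  fix S I Bs f P g
  assume "finite (I::'i set) \<and> (\<forall>B\<in>Bs. B \<subseteq> I)" "invertible (P::real^3^3)"
  then show "statics_proj_transf S I Bs f P g \<longleftrightarrow>
           (\<exists>A \<psi>. A \<in> lin_class (proj_matrix (force_kind S) P) \<and> (\<forall>i\<in>I. \<psi> i \<noteq> 0)
               \<and> equilibrium_preserving Bs \<psi> f \<and> (\<forall>i\<in>I. g i = congruence \<psi> f i v* A))"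
    using stat_part[of Bs I P S f g] by blast
next
  fix S I Bs f g
  assume H: "finite (I::'i set) \<and> (\<forall>B\<in>Bs. B \<subseteq> I)"
  show "(\<exists>P. statics_proj_transf S I Bs f P g) \<longleftrightarrow>
           (\<exists>A \<psi>. invertible A \<and> (\<forall>i\<in>I. \<psi> i \<noteq> 0)
               \<and> equilibrium_preserving Bs \<psi> f \<and> (\<forall>i\<in>I. g i = congruence \<psi> f i v* A))"
  proof
    assume "\<exists>P. statics_proj_transf S I Bs f P g"
    then obtain P where P: "statics_proj_transf S I Bs f P g" by blast
    then have iP: "invertible P" by (simp add: statics_proj_transf_def)
    then show "\<exists>A \<psi>. invertible A \<and> (\<forall>i\<in>I. \<psi> i \<noteq> 0)
               \<and> equilibrium_preserving Bs \<psi> f \<and> (\<forall>i\<in>I. g i = congruence \<psi> f i v* A)"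
    proof -
      have "\<forall>B\<in>Bs. B \<subseteq> I" using H by blast
      then obtain A \<psi> where "A \<in> lin_class (proj_matrix (force_kind S) P)" "\<forall>i\<in>I. \<psi> i \<noteq> 0"
               "equilibrium_preserving Bs \<psi> f" "\<forall>i\<in>I. g i = congruence \<psi> f i v* A"
        using stat_part[of Bs I P S f g] iP P \<open>\<forall>B\<in>Bs. B \<subseteq> I\<close> by blast
      then show ?thesis using lin_class_inv[OF pm_invertible[OF iP]] by blast
    qed
  next
    assume "\<exists>A \<psi>. invertible A \<and> (\<forall>i\<in>I. \<psi> i \<noteq> 0)
               \<and> equilibrium_preserving Bs \<psi> f \<and> (\<forall>i\<in>I. g i = congruence \<psi> f i v* A)"
    then obtain A \<psi> where A: "invertible A" "\<forall>i\<in>I. \<psi> i \<noteq> 0"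
               "equilibrium_preserving Bs \<psi> f" "\<forall>i\<in>I. g i = congruence \<psi> f i v* A" by blast
    obtain P where P: "invertible P" "proj_matrix (force_kind S) P = A" using pm_onto[OF A(1)] by blast
    have "statics_proj_transf S I Bs f P g"
      proof -
        have "\<exists>A' \<psi>. A' \<in> lin_class (proj_matrix (force_kind S) P) \<and> (\<forall>i\<in>I. \<psi> i \<noteq> 0)
               \<and> equilibrium_preserving Bs \<psi> f \<and> (\<forall>i\<in>I. g i = congruence \<psi> f i v* A')"
          unfolding P(2) using A(2,3,4) lin_class_self[of A] by blast
        moreover have "\<forall>B\<in>Bs. B \<subseteq> I" using H by blast
        ultimately show ?thesis using stat_part[of Bs I P S f g] P(1) by blast
      qed
    then show "\<exists>P. statics_proj_transf S I Bs f P g" by blast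
  qed
next
  fix A :: "real^3^3" and C :: "((real^3) \<times> 'j \<times> 'j) set" and e :: "'j \<Rightarrow> real^3"
  assume "invertible A"
  then show "compatible C e \<longleftrightarrow>
       compatible (map_constraints (\<lambda>c. c v* matrix_inv (transpose A)) C) (\<lambda>j. e j v* A)"
    using compat_transform[of C UNIV A "\<lambda>j. e j v* A" 1 e] by simp
next
  fix S J e P g and C :: "((real^3) \<times> 'j \<times> 'j) set"
  assume "finite (J::'j set) \<and> (\<forall>(c, j, k)\<in>C. j \<in> J \<and> k \<in> J)" "invertible (P::real^3^3)"
  then show "kin_proj_transf S J C e P g \<longleftrightarrow>
           (\<exists>A \<psi>. A \<in> lin_class (proj_matrix (vel_kind S) P) \<and> (\<forall>j\<in>J. \<psi> j \<noteq> 0)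
               \<and> compatibility_preserving C \<psi> e \<and> (\<forall>j\<in>J. g j = congruence \<psi> e j v* A))"
    using kin_part[of C J P S e g] by blast
next
  fix S J e g and C :: "((real^3) \<times> 'j \<times> 'j) set"
  assume H: "finite (J::'j set) \<and> (\<forall>(c, j, k)\<in>C. j \<in> J \<and> k \<in> J)"
  show "(\<exists>P. kin_proj_transf S J C e P g) \<longleftrightarrow>
           (\<exists>A \<psi>. invertible A \<and> (\<forall>j\<in>J. \<psi> j \<noteq> 0)
               \<and> compatibility_preserving C \<psi> e \<and> (\<forall>j\<in>J. g j = congruence \<psi> e j v* A))"
  proof
    assume "\<exists>P. kin_proj_transf S J C e P g"
    then obtain P where P: "kin_proj_transf S J C e P g" by blast
    then have iP: "invertible P" by (simp add: kin_proj_transf_def)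
    then show "\<exists>A \<psi>. invertible A \<and> (\<forall>j\<in>J. \<psi> j \<noteq> 0)
               \<and> compatibility_preserving C \<psi> e \<and> (\<forall>j\<in>J. g j = congruence \<psi> e j v* A)"
    proof -
      have "\<forall>(c, j, k)\<in>C. j \<in> J \<and> k \<in> J" using H by blast
      then obtain A \<psi> where "A \<in> lin_class (proj_matrix (vel_kind S) P)" "\<forall>j\<in>J. \<psi> j \<noteq> 0"
               "compatibility_preserving C \<psi> e" "\<forall>j\<in>J. g j = congruence \<psi> e j v* A"
        using kin_part[of C J P S e g] iP P \<open>\<forall>(c, j, k)\<in>C. j \<in> J \<and> k \<in> J\<close> by blast
      then show ?thesis using lin_class_inv[OF pm_invertible[OF iP]] by blast
    qed
  next
    assume "\<exists>A \<psi>. invertible A \<and> (\<forall>j\<in>J. \<psi> j \<noteq> 0)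
               \<and> compatibility_preserving C \<psi> e \<and> (\<forall>j\<in>J. g j = congruence \<psi> e j v* A)"
    then obtain A \<psi> where A: "invertible A" "\<forall>j\<in>J. \<psi> j \<noteq> 0"
               "compatibility_preserving C \<psi> e" "\<forall>j\<in>J. g j = congruence \<psi> e j v* A" by blast
    obtain P where P: "invertible P" "proj_matrix (vel_kind S) P = A" using pm_onto[OF A(1)] by blast
    have "kin_proj_transf S J C e P g"
      proof -
        have "\<exists>A' \<psi>. A' \<in> lin_class (proj_matrix (vel_kind S) P) \<and> (\<forall>j\<in>J. \<psi> j \<noteq> 0)
               \<and> compatibility_preserving C \<psi> e \<and> (\<forall>j\<in>J. g j = congruence \<psi> e j v* A')"
          unfolding P(2) using A(2,3,4) lin_class_self[of A] by blast
        moreover have "\<forall>(c, j, k)\<in>C. j \<in> J \<and> k \<in> J" using H by blast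
        ultimately show ?thesis using kin_part[of C J P S e g] P(1) by blast
      qed
    then show "\<exists>P. kin_proj_transf S J C e P g" by blast
  qed
qed

end
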